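(* Let $a,b>0$ and $c\in\mathbb{R}$, and let $\varphi_{a,b,c}(x)=\dfrac{c-\log(1-x)}{{}_2F_1(a,b;a+b;x)}$ on $(0,1)$. Then $\varphi_{a,b,c}$ is strictly increasing from $(0,1)$ onto $(c,B(a,b))$ if and only if $c\leq R(a,b)$, and $\varphi_{a,b,c}$ is strictly decreasing on $(0,1)$ if and only if $c\geq \frac1a+\frac1b$.
   Context: ${}_2F_1$ is the Gauss hypergeometric function. $B(a,b)=\Gamma(a)\Gamma(b)/\Gamma(a+b)$, $\psi=\Gamma'/\Gamma$, $\gamma=-\psi(1)$, $R(a,b)=-2\gamma-\psi(a)-\psi(b)$. *)

theory Defs
  imports "HOL-Analysis.Analysis"
begin

definition hyp2f1 :: "real \<Rightarrow> real \<Rightarrow> real \<Rightarrow> real \<Rightarrow> real" where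
  "hyp2f1 a b c x =
     (\<Sum>n. pochhammer a n * pochhammer b n / (pochhammer c n * fact n) * x ^ n)"

definition R_ab :: "real \<Rightarrow> real \<Rightarrow> real" where
  "R_ab a b = - 2 * euler_mascheroni - Digamma a - Digamma b"

definition phi_abc :: "real \<Rightarrow> real \<Rightarrow> real \<Rightarrow> real \<Rightarrow> real" where
  "phi_abc a b c x = (c - ln (1 - x)) / hyp2f1 a b (a + b) x"

end

theory Submission
  imports Defs "HOL-Real_Asymp.Real_Asymp"
begin


lemma Gamma_p1_real: "(x::real) > 0 \<Longrightarrow> Gamma (x+1) = x * Gamma x"
  by (rule Gamma_plus1) (auto elim!: nonpos_Ints_cases)

lemma lnGamma_diff_strict:
  fixes a s t :: real
  assumes a: "a > 0" and s: "0 < s" and st: "s < t"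
  shows "ln_Gamma (s+a) - ln_Gamma s < ln_Gamma (t+a) - ln_Gamma t"
proof -
  have "\<exists>z. s < z \<and> z < t \<and> (ln_Gamma (t+a) - ln_Gamma t) - (ln_Gamma (s+a) - ln_Gamma s)
        = (t - s) * (Digamma (z+a) - Digamma z)"
    using st s a
    by (intro MVT2[where f = "\<lambda>u. ln_Gamma (u+a) - ln_Gamma u"]) 
       (auto intro!: derivative_eq_intros)
  then obtain z where z: "s < z" "z < t" and eq: "(ln_Gamma (t+a) - ln_Gamma t) - (ln_Gamma (s+a) - ln_Gamma s)
        = (t - s) * (Digamma (z+a) - Digamma z)" by blast
  have "Digamma z < Digamma (z+a)" using z s a by (intro Digamma_real_strict_mono) auto
  with st have "(t - s) * (Digamma (z+a) - Digamma z) > 0" by simp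
  with eq show ?thesis by linarith
qed

lemma Gamma_ratio_strict:
  fixes a s t :: real
  assumes a: "a > 0" and s: "0 < s" and st: "s < t"
  shows "Gamma (s+a) / Gamma s < Gamma (t+a) / Gamma t"
proof -
  have e: "Gamma u = exp (ln_Gamma u)" if "u > 0" for u :: real using that by (rule Gamma_real_pos_exp)
  have "Gamma (s+a) / Gamma s = exp (ln_Gamma (s+a) - ln_Gamma s)"
    using a s st by (simp add: e exp_diff)
  also have "\<dots> < exp (ln_Gamma (t+a) - ln_Gamma t)"
    using lnGamma_diff_strict[OF assms] by simp
  also have "\<dots> = Gamma (t+a) / Gamma t"
    using a s st by (simp add: e exp_diff)
  finally show ?thesis .
qed

lemma Gamma_ratio_mono:
  fixes a s t :: real
  assumes a: "a > 0" and s: "0 < s" and st: "s \<le> t"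
  shows "Gamma (s+a) / Gamma s \<le> Gamma (t+a) / Gamma t"
  using Gamma_ratio_strict[OF a s] st by (cases "s = t") (auto intro: less_imp_le)




lemma Gamma_nz: "x > 0 \<Longrightarrow> Gamma x \<noteq> (0::real)"
  by (metis Gamma_real_pos less_irrefl)

definition ww :: "real \<Rightarrow> real \<Rightarrow> nat \<Rightarrow> real" where
  "ww a b n = Gamma (a + real n + 1) * Gamma (b + real n + 1) / (Gamma (a + b + real n + 1) * Gamma (real n + 1))"

definition ee :: "real \<Rightarrow> real \<Rightarrow> nat \<Rightarrow> real" where
  "ee a b n = ww a b n / ((real n + 1) * (a + b + real n + 1))"

definition dd :: "real \<Rightarrow> real \<Rightarrow> nat \<Rightarrow> real" where
  "dd a b n = (1 - ww a b n) / (real n + 1)"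

lemma ww_pos: "a > 0 \<Longrightarrow> b > 0 \<Longrightarrow> ww a b n > 0"
  unfolding ww_def by (intro divide_pos_pos mult_pos_pos Gamma_real_pos) auto

lemma ww_lt1: assumes "a > 0" "b > 0" shows "ww a b n < 1"
proof -
  have "Gamma (real n + 1 + a) / Gamma (real n + 1) < Gamma (real n + 1 + b + a) / Gamma (real n + 1 + b)"
    using assms by (intro Gamma_ratio_strict) auto
  moreover have "Gamma (real n + 1) > 0" "Gamma (real n + 1 + b) > 0" using assms by auto
  ultimately have "Gamma (real n + 1 + a) * Gamma (real n + 1 + b) < Gamma (real n + 1 + b + a) * Gamma (real n + 1)"
    by (simp add: divide_simps)
  moreover have "Gamma (a + b + real n + 1) * Gamma (real n + 1) > 0" using assms by auto
  ultimately show ?thesis unfolding ww_def by (simp add: divide_simps add_ac)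
qed

lemma ww_anti:
  assumes "a > 0" "b > 0" "b \<le> b'" shows "ww a b' n \<le> ww a b n"
proof -
  have "Gamma (b + real n + 1 + a) / Gamma (b + real n + 1) \<le> Gamma (b' + real n + 1 + a) / Gamma (b' + real n + 1)"
    using assms by (intro Gamma_ratio_mono) auto
  moreover have "Gamma (b + real n + 1) > 0" "Gamma (b' + real n + 1) > 0"
     "Gamma (b + real n + 1 + a) > 0" "Gamma (b' + real n + 1 + a) > 0" using assms by auto
  ultimately have X: "Gamma (b + real n + 1 + a) * Gamma (b' + real n + 1) \<le> Gamma (b' + real n + 1 + a) * Gamma (b + real n + 1)"
    by (simp add: divide_simps)
  hence "Gamma (b' + real n + 1) * Gamma (b + real n + 1 + a) \<le> Gamma (b + real n + 1) * Gamma (b' + real n + 1 + a)"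
    by (simp add: mult.commute)
  hence "Gamma (b' + real n + 1) / Gamma (b' + real n + 1 + a) \<le> Gamma (b + real n + 1) / Gamma (b + real n + 1 + a)"
    using \<open>Gamma (b + real n + 1 + a) > 0\<close> \<open>Gamma (b' + real n + 1 + a) > 0\<close> by (simp add: divide_simps)
  moreover have "Gamma (a + real n + 1) / Gamma (real n + 1) \<ge> 0" using assms by auto
  ultimately have "Gamma (a + real n + 1) / Gamma (real n + 1) * (Gamma (b' + real n + 1) / Gamma (b' + real n + 1 + a))
     \<le> Gamma (a + real n + 1) / Gamma (real n + 1) * (Gamma (b + real n + 1) / Gamma (b + real n + 1 + a))"
    by (rule mult_left_mono)
  thus ?thesis unfolding ww_def by (simp add: add_ac mult_ac)
qed

lemma ww_Suc:
  assumes "a > 0" "b > 0"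
  shows "ww a b (Suc n) = ww a b n * ((a + real n + 1) * (b + real n + 1)) / ((a + b + real n + 1) * (real n + 1))"
proof -
  have "Gamma (a + real (Suc n) + 1) = (a + real n + 1) * Gamma (a + real n + 1)"
    using assms Gamma_p1_real[of "a + real n + 1"] by (simp add: add_ac)
  moreover have "Gamma (b + real (Suc n) + 1) = (b + real n + 1) * Gamma (b + real n + 1)"
    using assms Gamma_p1_real[of "b + real n + 1"] by (simp add: add_ac)
  moreover have "Gamma (a + b + real (Suc n) + 1) = (a + b + real n + 1) * Gamma (a + b + real n + 1)"
    using assms Gamma_p1_real[of "a + b + real n + 1"] by (simp add: add_ac)
  moreover have "Gamma (real (Suc n) + 1) = (real n + 1) * Gamma (real n + 1)"
    using assms Gamma_p1_real[of "real n + 1"] by (simp add: add_ac)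
  ultimately show ?thesis unfolding ww_def by (simp add: field_simps)
qed

lemma ww_diff:
  assumes "a > 0" "b > 0"
  shows "ww a b (Suc n) - ww a b n = a * b * ee a b n"
proof -
  have p: "(a + b + real n + 1) * (real n + 1) > 0" "a + b + real n + 1 > 0" "real n + 1 > 0" using assms by auto
  have "ww a b (Suc n) - ww a b n = ww a b n * (((a + real n + 1) * (b + real n + 1)) / ((a + b + real n + 1) * (real n + 1)) - 1)"
    unfolding ww_Suc[OF assms] by (simp add: algebra_simps)
  also have "((a + real n + 1) * (b + real n + 1)) / ((a + b + real n + 1) * (real n + 1)) - 1
       = a * b / ((a + b + real n + 1) * (real n + 1))"
    using p by (simp add: divide_simps) (simp add: algebra_simps)
  finally show ?thesis unfolding ee_def by (simp add: algebra_simps)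
qed

lemma ww_b1:
  assumes "a > 0" "b > 0"
  shows "ww a (b+1) n = ww a b n * (b + real n + 1) / (a + b + real n + 1)"
proof -
  have "Gamma (b + 1 + real n + 1) = (b + real n + 1) * Gamma (b + real n + 1)"
    using assms Gamma_p1_real[of "b + real n + 1"] by (simp add: add_ac)
  moreover have "Gamma (a + (b + 1) + real n + 1) = (a + b + real n + 1) * Gamma (a + b + real n + 1)"
    using assms Gamma_p1_real[of "a + b + real n + 1"] by (simp add: add_ac)
  ultimately show ?thesis unfolding ww_def using assms by (simp add: field_simps)
qed

lemma cancel2: "(G::real) \<noteq> 0 \<Longrightarrow> H \<noteq> 0 \<Longrightarrow> G * (x * H) / ((y * G) * H) = x / y"
  by simp

lemma ww_1:
  assumes "a > 0"
  shows "ww a 1 n = (real n + 1) / (a + real n + 1)"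
proof -
  have e1: "Gamma (a + 1 + real n + 1) = (a + real n + 1) * Gamma (a + real n + 1)"
    using assms Gamma_p1_real[of "a + real n + 1"] by (simp add: add_ac)
  have e2: "Gamma (1 + real n + 1) = (real n + 1) * Gamma (real n + 1)"
    using assms Gamma_p1_real[of "real n + 1"] by (simp add: add_ac)
  have "Gamma (a + real n + 1) \<noteq> 0" "Gamma (real n + 1) \<noteq> 0" using assms by (auto intro!: Gamma_nz)
  then show ?thesis unfolding ww_def e1 e2 by (rule cancel2)
qed

lemma ww_0:
  assumes "a > 0" "b > 0"
  shows "ww a b 0 = a * b / (a + b) * Beta a b"
proof -
  have "Gamma (a + 1) = a * Gamma a" "Gamma (b + 1) = b * Gamma b" "Gamma (a + b + 1) = (a+b) * Gamma (a+b)"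
    using assms Gamma_p1_real by auto
  moreover have "Gamma (a+b) > 0" using assms by auto
  ultimately show ?thesis unfolding ww_def Beta_def using assms by (simp add: field_simps)
qed

lemma rho_lim:
  assumes z: "(z::real) > 0"
  shows "(\<lambda>n. Gamma (z + real n + 1) / (fact n * exp (z * ln (real n)))) \<longlonglongrightarrow> 1"
proof -
  have nz: "z \<notin> \<int>\<^sub>\<le>\<^sub>0" using z by (auto elim!: nonpos_Ints_cases)
  have "(\<lambda>n. Gamma z / Gamma_series z n) \<longlonglongrightarrow> Gamma z / Gamma z"
    using Gamma_nz[OF z] by (intro tendsto_intros) (use Gamma_nz[OF z] in auto)
  also have "Gamma z / Gamma z = 1" using Gamma_nz[OF z] by simp
  also have "(\<lambda>n. Gamma z / Gamma_series z n) = (\<lambda>n. Gamma (z + real n + 1) / (fact n * exp (z * ln (real n))))"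
  proof
    fix n
    have p: "pochhammer z (n+1) = Gamma (z + real n + 1) / Gamma z"
      using pochhammer_Gamma[OF nz, of "n+1"] by (simp add: add_ac)
    show "Gamma z / Gamma_series z n = Gamma (z + real n + 1) / (fact n * exp (z * ln (real n)))"
      unfolding Gamma_series_def p using z Gamma_nz[OF z] Gamma_nz[of "z + real n + 1"] by (simp add: field_simps)
  qed
  finally show ?thesis .
qed

lemma ww_lim:
  assumes "a > 0" "b > 0"
  shows "ww a b \<longlonglongrightarrow> 1"
proof -
  have "(\<lambda>n. (Gamma (a + real n + 1) / (fact n * exp (a * ln (real n)))) *
             (Gamma (b + real n + 1) / (fact n * exp (b * ln (real n)))) /
             (Gamma ((a + b) + real n + 1) / (fact n * exp ((a+b) * ln (real n))))) \<longlonglongrightarrow> 1 * 1 / 1"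
    using assms by (intro tendsto_intros rho_lim) auto
  also have "(\<lambda>n. (Gamma (a + real n + 1) / (fact n * exp (a * ln (real n)))) *
             (Gamma (b + real n + 1) / (fact n * exp (b * ln (real n)))) /
             (Gamma ((a + b) + real n + 1) / (fact n * exp ((a+b) * ln (real n))))) = ww a b"
  proof
    fix n
    have f: "Gamma (real n + 1) = fact n" using Gamma_fact[of n] by (simp add: add_ac)
    have "exp ((a+b) * ln (real n)) = exp (a * ln (real n)) * exp (b * ln (real n))"
      by (simp add: distrib_right exp_add)
    moreover have "Gamma ((a + b) + real n + 1) > 0" using assms by auto
    ultimately show "(Gamma (a + real n + 1) / (fact n * exp (a * ln (real n)))) *
             (Gamma (b + real n + 1) / (fact n * exp (b * ln (real n)))) /
             (Gamma ((a + b) + real n + 1) / (fact n * exp ((a+b) * ln (real n)))) = ww a b n"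
      unfolding ww_def f by (simp add: field_simps)
  qed
  finally show ?thesis by simp
qed

lemma ee_sums:
  assumes "a > 0" "b > 0"
  shows "ee a b sums (1 / (a*b) - Beta a b / (a + b))"
proof -
  have "(\<lambda>n. ww a b (Suc n) - ww a b n) sums (1 - ww a b 0)"
    by (rule telescope_sums[OF ww_lim[OF assms]])
  hence "(\<lambda>n. (ww a b (Suc n) - ww a b n) / (a*b)) sums ((1 - ww a b 0) / (a*b))"
    by (rule sums_divide)
  moreover have "(\<lambda>n. (ww a b (Suc n) - ww a b n) / (a*b)) = ee a b"
    using assms by (simp add: ww_diff)
  moreover have "(1 - ww a b 0) / (a*b) = 1 / (a*b) - Beta a b / (a + b)"
    using assms by (simp add: ww_0 field_simps)
  ultimately show ?thesis by simp
qed

lemma alg1: assumes "(q::real) > 0" "p > 0" "r + a = q" shows "(1 - W * r / q) / p = (1 - W)/p + a * (W / (p * q))"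
proof -
  have r: "r = q - a" using assms(3) by simp
  show ?thesis using assms(1,2) unfolding r by (simp add: field_simps)
qed

lemma dd_b1:
  assumes "a > 0" "b > 0"
  shows "dd a (b+1) n = dd a b n + a * ee a b n"
proof -
  have "a + b + real n + 1 > 0" "real n + 1 > 0" using assms by auto
  moreover have "(b + real n + 1) + a = a + b + real n + 1" by simp
  ultimately show ?thesis unfolding dd_def ee_def ww_b1[OF assms] by (rule alg1)
qed

lemma dd_1: "a > 0 \<Longrightarrow> dd a 1 n = inverse (real (Suc n)) - inverse ((a+1) + real n)"
  unfolding dd_def by (simp add: ww_1 field_simps)

lemma dd_nonneg: "a > 0 \<Longrightarrow> b > 0 \<Longrightarrow> dd a b n \<ge> 0"
  unfolding dd_def using ww_lt1[of a b n] by simp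

lemma dd_mono: "a > 0 \<Longrightarrow> b > 0 \<Longrightarrow> b \<le> b' \<Longrightarrow> dd a b n \<le> dd a b' n"
  unfolding dd_def using ww_anti[of a b b' n] by (simp add: divide_right_mono)

lemma summable_dd_nat: "a > 0 \<Longrightarrow> summable (dd a (real (Suc m)))"
proof (induction m)
  case 0
  have "summable (\<lambda>n. inverse (real (Suc n)) - inverse ((a+1) + real n))"
    using 0 summable_Digamma[of "a+1"] by simp
  then show ?case using 0 by (simp add: dd_1)
next
  case (Suc m)
  have "summable (\<lambda>n. dd a (real (Suc m)) n + a * ee a (real (Suc m)) n)"
    using Suc sums_summable[OF ee_sums[of a "real (Suc m)"]]
    by (intro summable_add summable_mult) auto
  moreover have "dd a (real (Suc (Suc m))) = (\<lambda>n. dd a (real (Suc m)) n + a * ee a (real (Suc m)) n)"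
    using dd_b1[of a "real (Suc m)"] Suc.prems by (simp add: fun_eq_iff add_ac)
  ultimately show ?case by simp
qed

lemma summable_dd: assumes "a > 0" "b > 0" shows "summable (dd a b)"
proof -
  define m where "m = nat \<lceil>b\<rceil>"
  have "b \<le> real (Suc m)" unfolding m_def by linarith
  show ?thesis
    by (rule summable_comparison_test'[OF summable_dd_nat[OF assms(1), of m], where N=0])
       (use assms dd_nonneg dd_mono \<open>b \<le> real (Suc m)\<close> in auto)
qed

definition Phi :: "real \<Rightarrow> real \<Rightarrow> real" where
  "Phi a b = suminf (dd a b) - Beta a b"

lemma Phi_plus1:
  assumes "a > 0" "b > 0"
  shows "Phi a (b+1) = Phi a b + 1/b"
proof -
  have "dd a (b+1) = (\<lambda>n. dd a b n + a * ee a b n)"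
    using dd_b1[OF assms] by (simp add: fun_eq_iff)
  hence "suminf (dd a (b+1)) = suminf (\<lambda>n. dd a b n + a * ee a b n)" by simp
  also have "\<dots> = suminf (dd a b) + a * (1 / (a*b) - Beta a b / (a + b))"
  proof -
    have "(\<lambda>n. a * ee a b n) sums (a * (1 / (a*b) - Beta a b / (a + b)))"
      by (rule sums_mult[OF ee_sums[OF assms]])
    from sums_add[OF summable_sums[OF summable_dd[OF assms]] this]
    show ?thesis by (rule sums_unique[symmetric])
  qed
  finally have 1: "suminf (dd a (b+1)) = suminf (dd a b) + a * (1 / (a*b) - Beta a b / (a + b))" .
  have 2: "(a + b) * Beta a (b+1) = b * Beta a b"
    using assms by (intro Beta_plus1_right) (auto elim!: nonpos_Ints_cases)
  have 3: "Beta a (b+1) = b * Beta a b / (a+b)" using 2 assms by (simp add: field_simps)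
  have 4: "a * (1/(a*b) - Beta a b/(a+b)) = 1/b - a * Beta a b/(a+b)" using assms by (simp add: right_diff_distrib)
  have "a * Beta a b/(a+b) + b*Beta a b/(a+b) = (a+b)*Beta a b/(a+b)" by (simp add: add_divide_distrib distrib_right)
  hence 5: "a * Beta a b/(a+b) + b*Beta a b/(a+b) = Beta a b" using assms by simp
  show ?thesis unfolding Phi_def 1 3 4 using 5 by linarith
qed

lemma Phi_mono:
  assumes "a > 0" "b > 0" "b \<le> b'"
  shows "Phi a b \<le> Phi a b'"
proof -
  have "suminf (dd a b) \<le> suminf (dd a b')"
    using assms by (intro suminf_le dd_mono summable_dd) auto
  moreover have "Beta a b' \<le> Beta a b"
    using assms by (intro Beta_real_mono) auto
  ultimately show ?thesis unfolding Phi_def by simp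
qed

lemma Beta_a1: "(a::real) > 0 \<Longrightarrow> Beta a 1 = 1 / a"
  unfolding Beta_def using Gamma_p1_real[of a] Gamma_nz[of a] by (simp add: field_simps)

lemma Phi_1:
  assumes "a > 0"
  shows "Phi a 1 = Digamma a + euler_mascheroni"
proof -
  have "dd a 1 = (\<lambda>n. inverse (of_nat (Suc n)) - inverse ((a+1) + of_nat n))"
    using assms dd_1[of a] by (simp add: fun_eq_iff)
  moreover have "Digamma (a+1) = (\<Sum>k. inverse (of_nat (Suc k)) - inverse ((a+1) + of_nat k)) - euler_mascheroni"
    by (rule Digamma_def)
  ultimately have "suminf (dd a 1) = Digamma (a+1) + euler_mascheroni"
    by simp
  also have "\<dots> = Digamma a + 1/a + euler_mascheroni"
    using assms by (simp add: Digamma_plus1)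
  finally show ?thesis unfolding Phi_def using assms by (simp add: Beta_a1)
qed




lemma Digamma_p1_real: "(x::real) > 0 \<Longrightarrow> Digamma (x + 1) = Digamma x + 1/x"
  by (rule Digamma_plus1) simp

lemma D_shift:
  assumes "a > 0" "b > 0"
  shows "Phi a (b + real n) - Digamma (b + real n) = Phi a b - Digamma b"
proof (induction n)
  case 0 then show ?case by simp
next
  case (Suc n)
  have p: "b + real n > 0" using assms by simp
  have e: "b + real (Suc n) = (b + real n) + 1" by simp
  have "Phi a (b + real (Suc n)) - Digamma (b + real (Suc n)) = Phi a (b + real n) - Digamma (b + real n)"
    unfolding e Phi_plus1[OF assms(1) p] Digamma_p1_real[OF p] by simp
  with Suc show ?case by simp
qed

lemma Phi_eq:
  assumes a: "a > 0" and b: "b > 0"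
  shows "Phi a b = Digamma a + Digamma b + 2 * euler_mascheroni"
proof -
  define D where "D x = Phi a x - Digamma x" for x
  have D1: "D 1 = Digamma a + 2 * euler_mascheroni" unfolding D_def using Phi_1[OF a] by simp
  have Dj: "D (real j) = D 1" if "j \<ge> 1" for j :: nat
    using D_shift[OF a, of 1 "j - 1"] that unfolding D_def by (simp add: of_nat_diff)
  have bound: "\<bar>D b - D 1\<bar> \<le> 1 / real n" if n: "n \<ge> 1" for n :: nat
  proof -
    define m where "m = nat \<lceil>b\<rceil>"
    have m1: "m \<ge> 1" unfolding m_def using b by linarith
    define j where "j = m - 1 + n"
    have j1: "j \<ge> n" "j \<ge> 1" unfolding j_def using n by auto
    have jr: "real j = real m - 1 + real n" unfolding j_def using m1 by (simp add: of_nat_diff)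
    have lo: "real j \<le> b + real n" and hi: "b + real n \<le> real j + 1"
      using jr unfolding m_def using b by linarith+
    have jpos: "real j > 0" using j1 by simp
    have P1: "Phi a (real j) \<le> Phi a (b + real n)" by (rule Phi_mono[OF a jpos lo])
    have P2: "Phi a (b + real n) \<le> Phi a (real j + 1)" using b by (intro Phi_mono[OF a _ hi]) auto
    have P3: "Phi a (real j + 1) = Phi a (real j) + 1 / real j" by (rule Phi_plus1[OF a jpos])
    have G1: "Digamma (real j) \<le> Digamma (b + real n)" by (rule Digamma_real_mono[OF jpos lo])
    have G2: "Digamma (b + real n) \<le> Digamma (real j + 1)" using b by (intro Digamma_real_mono[OF _ hi]) auto
    have G3: "Digamma (real j + 1) = Digamma (real j) + 1 / real j" by (rule Digamma_p1_real[OF jpos])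
    have "\<bar>D (b + real n) - D (real j)\<bar> \<le> 1 / real j"
      unfolding D_def using P1 P2 P3 G1 G2 G3 by linarith
    moreover have "1 / real j \<le> 1 / real n" using j1 n by (intro divide_left_mono) auto
    moreover have "D (b + real n) = D b" unfolding D_def by (rule D_shift[OF a b])
    moreover have "D (real j) = D 1" by (rule Dj[OF j1(2)])
    ultimately show ?thesis by simp
  qed
  have "D b = D 1"
  proof (rule ccontr)
    assume "D b \<noteq> D 1"
    hence "\<bar>D b - D 1\<bar> > 0" by simp
    then obtain n where n: "inverse (real (Suc n)) < \<bar>D b - D 1\<bar>" using reals_Archimedean by blast
    have "\<bar>D b - D 1\<bar> \<le> 1 / real (Suc n)" by (rule bound) simp
    with n show False by (simp add: inverse_eq_divide)
  qed
  thus ?thesis using D1 unfolding D_def by simp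
qed




definition AA :: "real \<Rightarrow> real \<Rightarrow> nat \<Rightarrow> real" where
  "AA a b n = pochhammer a n * pochhammer b n / (pochhammer (a+b) n * fact n)"

lemma hyp_AA: "hyp2f1 a b (a+b) x = (\<Sum>n. AA a b n * x^n)"
  unfolding hyp2f1_def AA_def by simp

lemma AA_pos: "a > 0 \<Longrightarrow> b > 0 \<Longrightarrow> AA a b n > 0"
  unfolding AA_def by (intro divide_pos_pos mult_pos_pos pochhammer_pos) auto

lemma AA_0 [simp]: "AA a b 0 = 1" unfolding AA_def by simp

lemma AA_1: "AA a b 1 = a * b / (a + b)" unfolding AA_def by simp

lemma Beta_pos: "a > 0 \<Longrightarrow> b > 0 \<Longrightarrow> Beta a b > (0::real)"
  unfolding Beta_def by simp

lemma alg2: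
  fixes Ga Gb Gab X Y Z G1 p :: real
  assumes "Ga \<noteq> 0" "Gb \<noteq> 0" "Gab \<noteq> 0" "Z \<noteq> 0" "G1 \<noteq> 0" "p \<noteq> 0"
  shows "Ga*Gb/Gab * ((X/Ga) * (Y/Gb) / ((Z/Gab) * (p * G1))) = X*Y/(Z*G1)/p"
  using assms by (simp add: field_simps)

lemma alg3: "(p::real) \<noteq> 0 \<Longrightarrow> p * (w / (p * B)) = w / B" by simp

lemma AA_Suc_ww:
  assumes a: "a > 0" and b: "b > 0"
  shows "Beta a b * AA a b (Suc n) = ww a b n / (real n + 1)"
proof -
  have nz: "z \<notin> \<int>\<^sub>\<le>\<^sub>0" if "z > 0" for z :: real using that by (auto elim!: nonpos_Ints_cases)
  have pa: "pochhammer a (Suc n) = Gamma (a + real n + 1) / Gamma a"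
    using pochhammer_Gamma[OF nz[OF a], of "Suc n"] by (simp add: add_ac)
  have pb: "pochhammer b (Suc n) = Gamma (b + real n + 1) / Gamma b"
    using pochhammer_Gamma[OF nz[OF b], of "Suc n"] by (simp add: add_ac)
  have pab: "pochhammer (a+b) (Suc n) = Gamma (a + b + real n + 1) / Gamma (a+b)"
    using pochhammer_Gamma[of "a+b" "Suc n"] nz[of "a+b"] a b by (simp add: add_ac)
  have g: "Gamma (real n + 1) = fact n" using Gamma_fact[of n] by (simp add: add.commute)
  have f: "fact (Suc n) = (real n + 1) * Gamma (real n + 1)"
    unfolding g by (simp add: add.commute)
  have "Gamma a > 0" "Gamma b > 0" "Gamma (a+b) > 0" "Gamma (a + b + real n + 1) > 0" "Gamma (real n + 1) > 0"
    using a b by auto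
  then show ?thesis unfolding AA_def Beta_def ww_def pa pb pab f by (intro alg2 Gamma_nz) (use a b in auto)
qed

lemma AA_Suc_eq:
  assumes a: "a > 0" and b: "b > 0"
  shows "AA a b (Suc n) = ww a b n / ((real n + 1) * Beta a b)"
proof -
  have "AA a b (Suc n) = (Beta a b * AA a b (Suc n)) / Beta a b" using Beta_pos[OF assms] by simp
  also have "\<dots> = ww a b n / (real n + 1) / Beta a b" by (simp only: AA_Suc_ww[OF assms])
  also have "\<dots> = ww a b n / ((real n + 1) * Beta a b)" by (simp add: divide_divide_eq_left)
  finally show ?thesis .
qed

lemma nAA_Suc:
  assumes a: "a > 0" and b: "b > 0"
  shows "real (Suc n) * AA a b (Suc n) = ww a b n / Beta a b"
proof -
  have "real (Suc n) * AA a b (Suc n) = (1 + real n) * (ww a b n / ((1 + real n) * Beta a b))"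
    by (simp only: AA_Suc_eq[OF assms] of_nat_Suc add.commute)
  also have "\<dots> = ww a b n / Beta a b" unfolding of_nat_Suc by (rule alg3) simp
  finally show ?thesis .
qed

lemma AA_le:
  assumes a: "a > 0" and b: "b > 0"
  shows "AA a b n \<le> 1 + 1 / Beta a b"
proof (cases n)
  case 0 then show ?thesis using Beta_pos[OF a b] by simp
next
  case (Suc m)
  have "AA a b n = ww a b m / ((real m + 1) * Beta a b)" using Suc AA_Suc_eq[OF a b] by simp
  also have "\<dots> \<le> 1 / Beta a b"
    using ww_lt1[OF a b, of m] ww_pos[OF a b, of m] Beta_pos[OF a b]
    by (simp add: divide_simps)
  finally show ?thesis by simp
qed

lemma summable_AA:
  assumes a: "a > 0" and b: "b > 0" and x: "\<bar>x\<bar> < 1"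
  shows "summable (\<lambda>n. AA a b n * x^n)"
proof (rule summable_comparison_test'[where N=0])
  show "summable (\<lambda>n. (1 + 1 / Beta a b) * \<bar>x\<bar>^n)"
    using x by (intro summable_mult summable_geometric) auto
  fix n :: nat
  show "norm (AA a b n * x^n) \<le> (1 + 1 / Beta a b) * \<bar>x\<bar>^n"
    using AA_le[OF a b, of n] AA_pos[OF a b, of n]
    by (simp add: abs_mult power_abs mult_right_mono)
qed

lemma ww_strict_inc: assumes "a > 0" "b > 0" shows "ww a b n < ww a b (Suc n)"
proof -
  have "ee a b n > 0" unfolding ee_def using assms ww_pos[OF assms, of n] by (intro divide_pos_pos mult_pos_pos) auto
  hence "a * b * ee a b n > 0" using assms by simp
  thus ?thesis using ww_diff[OF assms, of n] by linarith
qed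

lemma nAA_strict_inc:
  assumes a: "a > 0" and b: "b > 0" and n: "n \<ge> 1"
  shows "real n * AA a b n < real (Suc n) * AA a b (Suc n)"
proof -
  obtain m where m: "n = Suc m" using n by (cases n) auto
  have "real n * AA a b n = ww a b m / Beta a b" using m nAA_Suc[OF a b, of m] by simp
  moreover have "real (Suc n) * AA a b (Suc n) = ww a b (Suc m) / Beta a b"
    using m nAA_Suc[OF a b, of "Suc m"] by simp
  ultimately show ?thesis using ww_strict_inc[OF a b, of m] Beta_pos[OF a b] by (simp add: divide_strict_right_mono)
qed

lemma ln_sums:
  assumes "\<bar>x\<bar> < (1::real)"
  shows "(\<lambda>n. x^n / real n) sums (- ln (1 - x))"
proof -
  have "(\<lambda>n. - ((- (-x))^n) / of_nat n) sums ln (1 + (-x))"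
    using assms by (intro ln_series') simp
  hence "(\<lambda>n. - (x^n / real n)) sums ln (1 - x)" by simp
  thus ?thesis using sums_minus by fastforce
qed

lemma F_sums:
  assumes "a > 0" "b > 0" "\<bar>x\<bar> < 1"
  shows "(\<lambda>n. AA a b n * x^n) sums hyp2f1 a b (a+b) x"
  unfolding hyp_AA using summable_AA[OF assms] by (rule summable_sums)

lemma H_sums:
  assumes a: "a > 0" and b: "b > 0" and x: "\<bar>x\<bar> < 1"
  shows "(\<lambda>m. dd a b m * x^(Suc m)) sums (Beta a b - (Beta a b * hyp2f1 a b (a+b) x + ln (1 - x)))"
proof -
  have "(\<lambda>n. Beta a b * (AA a b n * x^n) - x^n / real n) sums (Beta a b * hyp2f1 a b (a+b) x - (- ln (1 - x)))"
    by (intro sums_diff sums_mult F_sums ln_sums a b x)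
  hence "(\<lambda>m. Beta a b * (AA a b (Suc m) * x^(Suc m)) - x^(Suc m) / real (Suc m)) sums
          (Beta a b * hyp2f1 a b (a+b) x + ln (1 - x) - Beta a b)"
    by (subst sums_Suc_iff) simp
  moreover have "(\<lambda>m. Beta a b * (AA a b (Suc m) * x^(Suc m)) - x^(Suc m) / real (Suc m)) = (\<lambda>m. - (dd a b m * x^(Suc m)))"
  proof
    fix m
    have "Beta a b * (AA a b (Suc m) * x^(Suc m)) = ww a b m / (real m + 1) * x^(Suc m)"
      using AA_Suc_ww[OF a b, of m] by (simp add: mult.assoc[symmetric])
    thus "Beta a b * (AA a b (Suc m) * x^(Suc m)) - x^(Suc m) / real (Suc m) = - (dd a b m * x^(Suc m))"
      unfolding dd_def by (simp add: field_simps)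
  qed
  ultimately have "(\<lambda>m. - (dd a b m * x^(Suc m))) sums (Beta a b * hyp2f1 a b (a+b) x + ln (1 - x) - Beta a b)"
    by simp
  from sums_minus[OF this] show ?thesis by simp
qed

lemma dd_sums:
  assumes a: "a > 0" and b: "b > 0"
  shows "dd a b sums (Beta a b - R_ab a b)"
proof -
  have "dd a b sums suminf (dd a b)" using summable_dd[OF a b] by (rule summable_sums)
  moreover have "suminf (dd a b) = Beta a b - R_ab a b"
    using Phi_eq[OF a b] unfolding Phi_def R_ab_def by simp
  ultimately show ?thesis by simp
qed

lemma dd0_pos: "a > 0 \<Longrightarrow> b > 0 \<Longrightarrow> dd a b 0 > 0"
  unfolding dd_def using ww_lt1[of a b 0] by simp

lemma H_gt_R:
  assumes a: "a > 0" and b: "b > 0" and x: "0 \<le> x" "x < 1"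
  shows "Beta a b * hyp2f1 a b (a+b) x + ln (1 - x) > R_ab a b"
proof -
  have x': "\<bar>x\<bar> < 1" using x by simp
  have "(\<lambda>m. dd a b m - dd a b m * x^(Suc m)) sums ((Beta a b - R_ab a b) - (Beta a b - (Beta a b * hyp2f1 a b (a+b) x + ln (1 - x))))"
    by (intro sums_diff dd_sums H_sums a b x')
  moreover have "0 < (\<Sum>m. dd a b m - dd a b m * x^(Suc m))"
  proof (rule suminf_pos2[where i=0])
    show "summable (\<lambda>m. dd a b m - dd a b m * x^(Suc m))" using calculation by (rule sums_summable)
    show "0 \<le> dd a b m - dd a b m * x^(Suc m)" for m
    proof -
      have "x^(Suc m) \<le> 1" using x by (intro power_le_one) auto
      thus ?thesis using dd_nonneg[OF a b, of m] by (simp add: mult_left_le)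
    qed
    show "0 < dd a b 0 - dd a b 0 * x^(Suc 0)" using dd0_pos[OF a b] x by simp
  qed
  ultimately show ?thesis by (simp add: sums_iff)
qed

lemma H_anti:
  assumes a: "a > 0" and b: "b > 0" and x: "0 \<le> x" "x \<le> y" "y < 1"
  shows "Beta a b * hyp2f1 a b (a+b) y + ln (1 - y) \<le> Beta a b * hyp2f1 a b (a+b) x + ln (1 - x)"
proof -
  have x': "\<bar>x\<bar> < 1" "\<bar>y\<bar> < 1" using x by auto
  have "(\<lambda>m. dd a b m * y^(Suc m) - dd a b m * x^(Suc m)) sums
        ((Beta a b - (Beta a b * hyp2f1 a b (a+b) y + ln (1 - y))) - (Beta a b - (Beta a b * hyp2f1 a b (a+b) x + ln (1 - x))))"
    by (intro sums_diff H_sums a b x')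
  moreover have "0 \<le> (\<Sum>m. dd a b m * y^(Suc m) - dd a b m * x^(Suc m))"
  proof (rule suminf_nonneg)
    show "summable (\<lambda>m. dd a b m * y^(Suc m) - dd a b m * x^(Suc m))" using calculation by (rule sums_summable)
    show "0 \<le> dd a b m * y^(Suc m) - dd a b m * x^(Suc m)" for m
    proof -
      have "x^(Suc m) \<le> y^(Suc m)" using x by (intro power_mono) auto
      thus ?thesis using dd_nonneg[OF a b, of m] by (simp add: mult_left_mono)
    qed
  qed
  ultimately show ?thesis by (simp add: sums_iff)
qed

lemma F_strict:
  assumes a: "a > 0" and b: "b > 0" and x: "0 \<le> x" "x < y" "y < 1"
  shows "hyp2f1 a b (a+b) x < hyp2f1 a b (a+b) y"
proof -
  have x': "\<bar>x\<bar> < 1" "\<bar>y\<bar> < 1" using x by auto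
  have "(\<lambda>n. AA a b n * y^n - AA a b n * x^n) sums (hyp2f1 a b (a+b) y - hyp2f1 a b (a+b) x)"
    by (intro sums_diff F_sums a b x')
  moreover have "0 < (\<Sum>n. AA a b n * y^n - AA a b n * x^n)"
  proof (rule suminf_pos2[where i=1])
    show "summable (\<lambda>n. AA a b n * y^n - AA a b n * x^n)" using calculation by (rule sums_summable)
    show "0 \<le> AA a b n * y^n - AA a b n * x^n" for n
    proof -
      have "x^n \<le> y^n" using x by (intro power_mono) auto
      thus ?thesis using AA_pos[OF a b, of n] by (simp add: mult_left_mono)
    qed
    show "0 < AA a b 1 * y^1 - AA a b 1 * x^1" using AA_pos[OF a b, of 1] x by simp
  qed
  ultimately show ?thesis by (simp add: sums_iff)
qed

lemma F_0: "hyp2f1 a b (a+b) 0 = 1"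
  unfolding hyp_AA using powser_zero[of "AA a b"] by simp

lemma F_ge1:
  assumes a: "a > 0" and b: "b > 0" and x: "0 \<le> x" "x < 1"
  shows "hyp2f1 a b (a+b) x \<ge> 1"
  using F_strict[OF a b, of 0 x] x F_0[of a b] by (cases "x = 0") auto

lemma F_cont:
  assumes a: "a > 0" and b: "b > 0" and x: "\<bar>x\<bar> < 1"
  shows "isCont (hyp2f1 a b (a+b)) x"
proof -
  define K where "K = (1 + \<bar>x\<bar>) / 2"
  have K: "\<bar>x\<bar> < K" "\<bar>K\<bar> < 1" unfolding K_def using x by auto
  have "isCont (\<lambda>x. \<Sum>n. AA a b n * x^n) x"
    by (rule isCont_powser[OF summable_AA[OF a b K(2)]]) (use K in simp)
  thus ?thesis unfolding hyp_AA[abs_def] by simp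
qed




lemma phi_cont:
  assumes a: "a > 0" and b: "b > 0" and x: "0 \<le> x" "x < 1"
  shows "isCont (phi_abc a b c) x"
proof -
  have "isCont (hyp2f1 a b (a+b)) x" using x by (intro F_cont a b) auto
  moreover have "hyp2f1 a b (a+b) x \<noteq> 0" using F_ge1[OF a b x] by simp
  ultimately show ?thesis unfolding phi_abc_def[abs_def] using x
    by (intro continuous_intros) auto
qed

lemma phi_lim0:
  assumes a: "a > 0" and b: "b > 0"
  shows "(phi_abc a b c \<longlongrightarrow> c) (at_right 0)"
proof -
  have "(phi_abc a b c \<longlongrightarrow> phi_abc a b c 0) (at 0)"
    using phi_cont[OF a b, of 0 c] by (simp add: isCont_def)
  moreover have "phi_abc a b c 0 = c" unfolding phi_abc_def by (simp add: F_0)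
  ultimately show ?thesis by (auto intro: tendsto_mono[OF at_le])
qed

lemma phi_H:
  assumes a: "a > 0" and b: "b > 0" and x: "0 \<le> x" "x < 1"
  shows "phi_abc a b c x = Beta a b + (c - (Beta a b * hyp2f1 a b (a+b) x + ln (1 - x))) / hyp2f1 a b (a+b) x"
  using F_ge1[OF a b x] unfolding phi_abc_def by (simp add: field_simps)

lemma H_le_B:
  assumes a: "a > 0" and b: "b > 0" and x: "0 \<le> x" "x < 1"
  shows "Beta a b * hyp2f1 a b (a+b) x + ln (1 - x) \<le> Beta a b"
  using H_anti[OF a b order_refl x(1) x(2)] by (simp add: F_0)

lemma F_to_inf:
  assumes a: "a > 0" and b: "b > 0"
  shows "filterlim (hyp2f1 a b (a+b)) at_top (at_left 1)"
proof (rule filterlim_at_top_mono)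
  define B where "B = Beta a b"
  define R where "R = R_ab a b"
  have B: "B > 0" unfolding B_def by (rule Beta_pos[OF a b])
  show "filterlim (\<lambda>x. (R - ln (1 - x)) / B) at_top (at_left 1)"
    using B by real_asymp
  have ev: "eventually (\<lambda>x::real. 0 < x \<and> x < 1) (at_left 1)"
    using eventually_at_left_real[of 0 "1::real"] by simp
  show "eventually (\<lambda>x. (R - ln (1 - x)) / B \<le> hyp2f1 a b (a+b) x) (at_left 1)"
    using ev
  proof eventually_elim
    case (elim x)
    have "R < B * hyp2f1 a b (a+b) x + ln (1 - x)" unfolding R_def B_def using elim by (intro H_gt_R a b) auto
    thus ?case using B by (simp add: divide_simps mult.commute)
  qed
qed

lemma phi_lim1:
  assumes a: "a > 0" and b: "b > 0"
  shows "(phi_abc a b c \<longlongrightarrow> Beta a b) (at_left 1)"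
proof -
  define F where "F = hyp2f1 a b (a+b)"
  define H where "H x = Beta a b * F x + ln (1 - x)" for x
  define K where "K = \<bar>c\<bar> + \<bar>R_ab a b\<bar> + \<bar>Beta a b\<bar>"
  have ev: "eventually (\<lambda>x::real. 0 < x \<and> x < 1) (at_left 1)"
    using eventually_at_left_real[of 0 "1::real"] by simp
  have "((\<lambda>x. inverse (F x)) \<longlongrightarrow> 0) (at_left 1)"
    unfolding F_def by (intro tendsto_inverse_0_at_top F_to_inf a b)
  moreover have "eventually (\<lambda>x. norm ((c - H x) / F x) \<le> norm (inverse (F x)) * K) (at_left 1)"
    using ev
  proof eventually_elim
    case (elim x)
    have h1: "H x > R_ab a b" unfolding H_def F_def using elim by (intro H_gt_R a b) auto
    have h2: "H x \<le> Beta a b" unfolding H_def F_def using elim by (intro H_le_B a b) auto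
    have f: "F x \<ge> 1" unfolding F_def using elim by (intro F_ge1 a b) auto
    have "\<bar>c - H x\<bar> \<le> K" unfolding K_def using h1 h2 by linarith
    thus ?case using f by (simp add: divide_simps abs_div mult.commute)
  qed
  ultimately have "((\<lambda>x. (c - H x) / F x) \<longlongrightarrow> 0) (at_left 1)" by (rule tendsto_0_le)
  hence "((\<lambda>x. Beta a b + (c - H x) / F x) \<longlongrightarrow> Beta a b + 0) (at_left 1)"
    by (intro tendsto_intros)
  moreover have "eventually (\<lambda>x. Beta a b + (c - H x) / F x = phi_abc a b c x) (at_left 1)"
    using ev by eventually_elim (simp add: phi_H[OF a b] H_def F_def)
  ultimately show ?thesis by (simp add: tendsto_cong)
qed




lemma key_inc:
  fixes B Fx Fy Lx Ly Hx Hy c :: real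
  assumes "B > 0" "Fx > 0" "Fy > 0" "B * Fx = Lx + Hx" "B * Fy = Ly + Hy"
    "c < Hx" "Fx < Fy" "Hy \<le> Hx"
  shows "(c + Lx) / Fx < (c + Ly) / Fy"
proof -
  have Lx: "Lx = B * Fx - Hx" and Ly: "Ly = B * Fy - Hy" using assms by linarith+
  have "(c - Hx) * Fy < (c - Hx) * Fx" using assms by (intro mult_strict_left_mono_neg) auto
  moreover have "Hy * Fx \<le> Hx * Fx" using assms by (intro mult_right_mono) auto
  ultimately have "(c + Lx) * Fy < (c + Ly) * Fx" unfolding Lx Ly by (simp add: algebra_simps)
  thus ?thesis using assms by (simp add: divide_simps)
qed

lemma ev01_left: "eventually (\<lambda>x::real. 0 < x \<and> x < 1) (at_left 1)"
  using eventually_at_left_real[of 0 "1::real"] by simp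

lemma ev01_right: "eventually (\<lambda>x::real. 0 < x \<and> x < 1) (at_right 0)"
  using eventually_at_right_real[of 0 "1::real"] by simp

lemma phi_strict_mono:
  assumes a: "a > 0" and b: "b > 0" and c: "c \<le> R_ab a b"
  shows "strict_mono_on {0<..<1} (phi_abc a b c)"
proof (rule strict_mono_onI)
  fix x y :: real assume x: "x \<in> {0<..<1}" and y: "y \<in> {0<..<1}" and xy: "x < y"
  define F where "F = hyp2f1 a b (a+b)"
  have "(c + - ln (1 - x)) / F x < (c + - ln (1 - y)) / F y"
  proof (rule key_inc)
    show "Beta a b > 0" by (rule Beta_pos[OF a b])
    show "F x > 0" "F y > 0" unfolding F_def using F_ge1[OF a b, of x] F_ge1[OF a b, of y] x y by auto
    show "Beta a b * F x = - ln (1 - x) + (Beta a b * F x + ln (1 - x))" by simp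
    show "Beta a b * F y = - ln (1 - y) + (Beta a b * F y + ln (1 - y))" by simp
    show "c < Beta a b * F x + ln (1 - x)" unfolding F_def using H_gt_R[OF a b, of x] x c by auto
    show "F x < F y" unfolding F_def using F_strict[OF a b, of x y] x y xy by auto
    show "Beta a b * F y + ln (1 - y) \<le> Beta a b * F x + ln (1 - x)" unfolding F_def
      using H_anti[OF a b, of x y] x y xy by auto
  qed
  thus "phi_abc a b c x < phi_abc a b c y" unfolding phi_abc_def F_def by simp
qed

lemma image_from_mono:
  assumes a: "a > 0" and b: "b > 0" and mono: "strict_mono_on {0<..<1} (phi_abc a b c)"
  shows "phi_abc a b c ` {0<..<1} = {c<..<Beta a b}"
proof
  let ?p = "phi_abc a b c"
  show "?p ` {0<..<1} \<subseteq> {c<..<Beta a b}"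
  proof
    fix z assume "z \<in> ?p ` {0<..<1}"
    then obtain x where x: "x \<in> {0<..<1}" and z: "z = ?p x" by auto
    have "c \<le> ?p (x/2)"
    proof (rule tendsto_upperbound[OF phi_lim0[OF a b, where c=c]])
      show "\<forall>\<^sub>F t in at_right 0. ?p t \<le> ?p (x/2)"
        using eventually_at_right_real[of 0 "x/2"] x
      proof -
        have "eventually (\<lambda>t. t \<in> {0<..<x/2}) (at_right (0::real))"
          using x by (intro eventually_at_right_real) auto
        thus ?thesis
          by eventually_elim (use x in \<open>auto intro!: less_imp_le strict_mono_onD[OF mono]\<close>)
      qed
    qed simp
    also have "?p (x/2) < ?p x" using x by (intro strict_mono_onD[OF mono]) auto
    finally have 1: "c < ?p x" .
    have "?p x < ?p ((x+1)/2)" using x by (intro strict_mono_onD[OF mono]) auto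
    also have "?p ((x+1)/2) \<le> Beta a b"
    proof (rule tendsto_lowerbound[OF phi_lim1[OF a b, where c=c]])
      have "eventually (\<lambda>t. t \<in> {(x+1)/2<..<1}) (at_left (1::real))"
        using x by (intro eventually_at_left_real) auto
      thus "\<forall>\<^sub>F t in at_left 1. ?p ((x+1)/2) \<le> ?p t"
        by eventually_elim (use x in \<open>auto intro!: less_imp_le strict_mono_onD[OF mono]\<close>)
    qed simp
    finally show "z \<in> {c<..<Beta a b}" using 1 z by simp
  qed
  show "{c<..<Beta a b} \<subseteq> ?p ` {0<..<1}"
  proof
    fix y assume y: "y \<in> {c<..<Beta a b}"
    have "eventually (\<lambda>t. ?p t < y \<and> (0 < t \<and> t < 1)) (at_right 0)"
      using order_tendstoD(2)[OF phi_lim0[OF a b, where c=c], of y] y ev01_right by (auto intro: eventually_conj)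
    then obtain x1 where x1: "?p x1 < y" "0 < x1" "x1 < 1"
      using eventually_happens'[of "at_right (0::real)"] by auto
    have "eventually (\<lambda>t. y < ?p t \<and> (0 < t \<and> t < 1)) (at_left 1)"
      using order_tendstoD(1)[OF phi_lim1[OF a b, where c=c], of y] y ev01_left by (auto intro: eventually_conj)
    then obtain x2 where x2: "y < ?p x2" "0 < x2" "x2 < 1"
      using eventually_happens'[of "at_left (1::real)"] by auto
    have "x1 < x2"
    proof (rule ccontr)
      assume "\<not> x1 < x2"
      hence "x2 \<le> x1" by simp
      have "?p x2 \<le> ?p x1"
      proof (cases "x2 = x1")
        case False
        hence "x2 < x1" using \<open>x2 \<le> x1\<close> by simp
        thus ?thesis using x1 x2 by (intro less_imp_le strict_mono_onD[OF mono]) auto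
      qed simp
      with x1 x2 show False by simp
    qed
    have "\<exists>x. x1 \<le> x \<and> x \<le> x2 \<and> ?p x = y"
      using x1 x2 \<open>x1 < x2\<close> by (intro IVT allI impI phi_cont a b) auto
    then obtain x where "x1 \<le> x" "x \<le> x2" "?p x = y" by blast
    thus "y \<in> ?p ` {0<..<1}" using x1 x2 by force
  qed
qed




lemma part_II:
  assumes a: "a > 0" and b: "b > 0" and img: "phi_abc a b c ` {0<..<1} = {c<..<Beta a b}"
  shows "c \<le> R_ab a b"
proof (rule ccontr)
  assume "\<not> c \<le> R_ab a b"
  hence cR: "R_ab a b < c" by simp
  define B where "B = Beta a b"
  have "(\<lambda>N. \<Sum>n<N. dd a b n) \<longlonglongrightarrow> B - R_ab a b"
    using dd_sums[OF a b] unfolding B_def by (simp add: sums_def)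
  hence "eventually (\<lambda>N. B - c < (\<Sum>n<N. dd a b n)) sequentially"
    using cR by (intro order_tendstoD(1)) auto
  then obtain N where N: "B - c < (\<Sum>n<N. dd a b n)" by (auto simp: eventually_sequentially)
  define p where "p x = (\<Sum>n<N. dd a b n * x^(Suc n))" for x :: real
  have "(p \<longlongrightarrow> p 1) (at_left 1)"
    unfolding p_def by (intro tendsto_intros)
  moreover have "p 1 = (\<Sum>n<N. dd a b n)" unfolding p_def by simp
  ultimately have "eventually (\<lambda>x. B - c < p x) (at_left 1)"
    using N by (intro order_tendstoD(1)) auto
  hence "eventually (\<lambda>x. B - c < p x \<and> (0 < x \<and> x < 1)) (at_left 1)"
    using ev01_left by (rule eventually_conj)
  then obtain x where x: "B - c < p x" "0 < x" "x < 1"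
    using eventually_happens'[of "at_left (1::real)"] by auto
  define H where "H = B * hyp2f1 a b (a+b) x + ln (1 - x)"
  have s: "(\<lambda>m. dd a b m * x^(Suc m)) sums (B - H)"
    unfolding H_def B_def using x by (intro H_sums a b) auto
  have "p x \<le> (\<Sum>m. dd a b m * x^(Suc m))"
    unfolding p_def using x dd_nonneg[OF a b]
    by (intro sum_le_suminf sums_summable[OF s]) auto
  hence "H < c" using s x(1) by (simp add: sums_iff)
  hence "phi_abc a b c x > B"
    using phi_H[OF a b, of x c] x F_ge1[OF a b, of x] unfolding H_def B_def by simp
  moreover have "phi_abc a b c x \<in> {c<..<Beta a b}" using img x by auto
  ultimately show False unfolding B_def by simp
qed

lemma phi_lt_c_of_anti:
  assumes a: "a > 0" and b: "b > 0" and anti: "strict_antimono_on {0<..<1} (phi_abc a b c)"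
    and x: "0 < x" "x < 1"
  shows "phi_abc a b c x < c"
proof -
  let ?p = "phi_abc a b c"
  have ad: "?p s < ?p r" if "0 < r" "r < s" "s < 1" for r s
    using anti that unfolding monotone_on_def by auto
  have "?p x < ?p (x/2)" using x by (intro ad) auto
  also have "?p (x/2) \<le> c"
  proof (rule tendsto_lowerbound[OF phi_lim0[OF a b, where c=c]])
    have "eventually (\<lambda>t. t \<in> {0<..<x/2}) (at_right (0::real))"
      using x by (intro eventually_at_right_real) auto
    thus "\<forall>\<^sub>F t in at_right 0. ?p (x/2) \<le> ?p t"
      by eventually_elim (use x in \<open>auto intro!: less_imp_le ad\<close>)
  qed simp
  finally show ?thesis .
qed

lemma part_IV:
  assumes a: "a > 0" and b: "b > 0" and anti: "strict_antimono_on {0<..<1} (phi_abc a b c)"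
  shows "1 / a + 1 / b \<le> c"
proof (rule ccontr)
  assume "\<not> 1 / a + 1 / b \<le> c"
  hence "c < (a + b) / (a * b)" using a b by (simp add: field_simps)
  hence q0: "c * AA a b 1 < 1" using a b unfolding AA_1 by (simp add: field_simps)
  define q where "q n = 1 / real (Suc n) - c * AA a b (Suc n)" for n
  define M where "M = 1 + \<bar>c\<bar> * (1 + 1 / Beta a b)"
  have qb: "\<bar>q n\<bar> \<le> M" for n
  proof -
    have "\<bar>q n\<bar> \<le> \<bar>1 / real (Suc n)\<bar> + \<bar>c * AA a b (Suc n)\<bar>"
      unfolding q_def by (rule abs_triangle_ineq4)
    also have "\<dots> = 1 / real (Suc n) + \<bar>c\<bar> * AA a b (Suc n)"
      using AA_pos[OF a b, of "Suc n"] by (simp add: abs_mult)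
    also have "\<dots> \<le> 1 + \<bar>c\<bar> * (1 + 1 / Beta a b)"
      by (intro add_mono mult_left_mono AA_le a b) auto
    finally show ?thesis unfolding M_def .
  qed
  have qsum: "summable (\<lambda>n. q n * x^n)" if "\<bar>x\<bar> < 1" for x :: real
  proof (rule summable_comparison_test'[where N=0])
    show "summable (\<lambda>n. M * \<bar>x\<bar>^n)" using that by (intro summable_mult summable_geometric) auto
    show "norm (q n * x^n) \<le> M * \<bar>x\<bar>^n" for n
      using qb[of n] by (simp add: abs_mult power_abs mult_right_mono)
  qed
  define Q where "Q x = (\<Sum>n. q n * x^n)" for x :: real
  have "isCont Q 0" unfolding Q_def[abs_def]
    by (rule isCont_powser[OF qsum[of "1/2"]]) auto
  moreover have "Q 0 = q 0" unfolding Q_def using powser_zero[of q] by simp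
  moreover have "q 0 > 0" unfolding q_def using q0 by simp
  ultimately have "(Q \<longlongrightarrow> q 0) (at_right 0)"
    by (auto simp: isCont_def intro: tendsto_mono[OF at_le])
  hence "eventually (\<lambda>x. 0 < Q x) (at_right 0)" using \<open>q 0 > 0\<close> by (intro order_tendstoD(1)) auto
  hence "eventually (\<lambda>x. 0 < Q x \<and> (0 < x \<and> x < 1)) (at_right 0)"
    using ev01_right by (rule eventually_conj)
  then obtain x where x: "0 < Q x" "0 < x" "x < 1"
    using eventually_happens'[of "at_right (0::real)"] by auto
  have x1: "\<bar>x\<bar> < 1" using x by simp
  define F where "F = hyp2f1 a b (a+b) x"
  have "(\<lambda>n. x^n / real n - c * (AA a b n * x^n)) sums (- ln (1 - x) - c * F)"
    unfolding F_def by (intro sums_diff sums_mult ln_sums F_sums a b x1)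
  hence "(\<lambda>m. x^(Suc m) / real (Suc m) - c * (AA a b (Suc m) * x^(Suc m))) sums (- ln (1 - x) - c * F + c)"
    by (subst sums_Suc_iff) simp
  moreover have "(\<lambda>m. x^(Suc m) / real (Suc m) - c * (AA a b (Suc m) * x^(Suc m))) = (\<lambda>m. x * (q m * x^m))"
  proof
    fix m
    show "x^(Suc m) / real (Suc m) - c * (AA a b (Suc m) * x^(Suc m)) = x * (q m * x^m)"
      unfolding q_def power_Suc by (simp only: right_diff_distrib left_diff_distrib divide_inverse mult_ac)
  qed
  ultimately have s1: "(\<lambda>m. x * (q m * x^m)) sums (- ln (1 - x) - c * F + c)" by simp
  have s2: "(\<lambda>m. x * (q m * x^m)) sums (x * Q x)"
    unfolding Q_def by (intro sums_mult summable_sums qsum x1)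
  have "x * Q x = - ln (1 - x) - c * F + c" by (rule sums_unique2[OF s2 s1])
  moreover have "x * Q x > 0" using x by simp
  moreover have "F \<ge> 1" unfolding F_def using x by (intro F_ge1 a b) auto
  ultimately have "c * F < c - ln (1 - x)" by linarith
  hence "phi_abc a b c x > c" unfolding phi_abc_def F_def[symmetric] using \<open>F \<ge> 1\<close>
    by (simp add: pos_less_divide_eq)
  moreover have "phi_abc a b c x < c" using x by (intro phi_lt_c_of_anti[OF a b anti]) auto
  ultimately show False by simp
qed




lemma ratio_neg:
  fixes s :: "nat \<Rightarrow> real"
  assumes x: "0 < x" "x < y"
    and sx: "summable (\<lambda>n. s n * x^n)" and sy: "summable (\<lambda>n. s n * y^n)"
    and z: "(\<Sum>n. s n * x^n) = 0"
    and lo: "\<And>n. n < N \<Longrightarrow> s n \<ge> 0" and hi: "\<And>n. N \<le> n \<Longrightarrow> s n \<le> 0"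
    and neg: "s (Suc N) < 0"
  shows "(\<Sum>n. s n * y^n) < 0"
proof -
  define t where "t = y / x"
  have t1: "t > 1" unfolding t_def using x by simp
  have yt: "y^n = t^n * x^n" for n unfolding t_def using x by (simp add: power_divide)
  define g where "g n = t^N * (s n * x^n) - s n * y^n" for n
  have g: "g n = (s n * x^n) * (t^N - t^n)" for n unfolding g_def yt by (simp add: algebra_simps)
  have gs: "g sums (t^N * 0 - (\<Sum>n. s n * y^n))"
    unfolding g_def[abs_def] using sx sy z
    by (intro sums_diff sums_mult summable_sums) (auto simp: sums_iff)
  have "0 < suminf g"
  proof (rule suminf_pos2[where i="Suc N"])
    show "summable g" using gs by (rule sums_summable)
    show "0 \<le> g n" for n
    proof (cases "n < N")
      case True
      have "t^n \<le> t^N" using t1 True by (intro power_increasing) auto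
      moreover have "s n * x^n \<ge> 0" using lo[OF True] x by simp
      ultimately show ?thesis unfolding g by simp
    next
      case False
      have "t^N \<le> t^n" using t1 False by (intro power_increasing) auto
      moreover have "s n * x^n \<le> 0" using hi[of n] False x by (simp add: mult_nonpos_nonneg)
      ultimately show ?thesis unfolding g by (simp add: mult_nonpos_nonpos)
    qed
    have "t^N < t^(Suc N)" using t1 by simp
    moreover have "s (Suc N) * x^(Suc N) < 0" using neg x by (simp add: mult_neg_pos)
    ultimately show "0 < g (Suc N)" unfolding g by (simp add: mult_neg_neg)
  qed
  thus ?thesis using gs by (simp add: sums_iff)
qed

definition CC :: "real \<Rightarrow> nat \<Rightarrow> real" where
  "CC c n = (if n = 0 then c else 1 / real n)"

lemma CC_sums:
  assumes "0 \<le> x" "x < 1"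
  shows "(\<lambda>n. CC c n * x^n) sums (c - ln (1 - x))"
proof -
  have "(\<lambda>n. x^n / real n) sums (- ln (1 - x))" using assms by (intro ln_sums) auto
  hence "(\<lambda>m. x^(Suc m) / real (Suc m)) sums (- ln (1 - x))"
    by (subst sums_Suc_iff) simp
  moreover have "(\<lambda>m. CC c (Suc m) * x^(Suc m)) = (\<lambda>m. x^(Suc m) / real (Suc m))"
    unfolding CC_def by (simp add: fun_eq_iff)
  ultimately have "(\<lambda>m. CC c (Suc m) * x^(Suc m)) sums (c - ln (1 - x) - CC c 0 * x^0)"
    unfolding CC_def by simp
  thus ?thesis by (subst (asm) sums_Suc_iff) simp
qed

lemma r_dec:
  assumes a: "a > 0" and b: "b > 0" and c: "1 / a + 1 / b \<le> c"
  shows "CC c (Suc n) / AA a b (Suc n) \<le> CC c n / AA a b n"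
proof (cases n)
  case 0
  have "1 / AA a b 1 = 1 / a + 1 / b" unfolding AA_1 using a b by (simp add: field_simps)
  thus ?thesis using 0 c unfolding CC_def by simp
next
  case (Suc m)
  have p1: "real n * AA a b n > 0" using AA_pos[OF a b, of n] Suc by simp
  have lt: "real n * AA a b n < real (Suc n) * AA a b (Suc n)" using Suc by (intro nAA_strict_inc a b) auto
  have "CC c (Suc n) / AA a b (Suc n) = 1 / (real (Suc n) * AA a b (Suc n))" unfolding CC_def by simp
  also have "\<dots> \<le> 1 / (real n * AA a b n)" using p1 lt by (intro divide_left_mono) auto
  also have "\<dots> = CC c n / AA a b n" unfolding CC_def using Suc by simp
  finally show ?thesis .
qed

lemma part_III:
  assumes a: "a > 0" and b: "b > 0" and c: "1 / a + 1 / b \<le> c"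
  shows "strict_antimono_on {0<..<1} (phi_abc a b c)"
  unfolding monotone_on_def
proof (intro ballI impI)
  fix x y :: real assume x: "x \<in> {0<..<1}" and y: "y \<in> {0<..<1}" and xy: "x < y"
  define F where "F = hyp2f1 a b (a+b)"
  define l where "l = phi_abc a b c x"
  define s where "s n = CC c n - l * AA a b n" for n
  have Fx: "F x \<ge> 1" "F y \<ge> 1" unfolding F_def using x y by (auto intro!: F_ge1 a b)
  have sxs: "(\<lambda>n. s n * x^n) sums ((c - ln (1 - x)) - l * F x)"
    unfolding s_def F_def using x by (simp add: left_diff_distrib mult.assoc)
       (intro sums_diff sums_mult CC_sums F_sums a b, auto)
  have sys: "(\<lambda>n. s n * y^n) sums ((c - ln (1 - y)) - l * F y)"
    unfolding s_def F_def using y by (simp add: left_diff_distrib mult.assoc)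
       (intro sums_diff sums_mult CC_sums F_sums a b, auto)
  have lF: "l * F x = c - ln (1 - x)" unfolding l_def phi_abc_def F_def[symmetric] using Fx by simp
  have z: "(\<Sum>n. s n * x^n) = 0" using sxs lF by (simp add: sums_iff)
  define r where "r n = CC c n / AA a b n" for n
  have rdec: "r n \<le> r m" if "m \<le> n" for m n
  proof -
    have "decseq r" unfolding r_def by (intro decseq_SucI r_dec a b c)
    thus ?thesis using that by (simp add: decseqD)
  qed
  have sr: "s n = AA a b n * (r n - l)" for n
    unfolding s_def r_def using AA_pos[OF a b, of n] by (simp add: field_simps)
  have "\<exists>n. s n < 0"
  proof (rule ccontr)
    assume "\<not> (\<exists>n. s n < 0)"
    hence nn: "s n \<ge> 0" for n by (simp add: not_less)
    have "\<forall>n. s n * x^n = 0"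
      using suminf_eq_zero_iff[of "\<lambda>n. s n * x^n"] sums_summable[OF sxs] z nn x by simp
    hence "s 1 = 0" "s 2 = 0" using x by (auto dest: spec[of _ 1] spec[of _ 2])
    hence e1: "l * AA a b 1 = 1" and e2: "l * (2 * AA a b 2) = 1" unfolding s_def CC_def by simp_all
    have "real 1 * AA a b 1 < real (Suc 1) * AA a b (Suc 1)" by (intro nAA_strict_inc a b) auto
    hence lt: "AA a b 1 < 2 * AA a b 2" by (simp add: numeral_2_eq_2)
    have "l \<noteq> 0" using e1 by auto
    have "l * AA a b 1 = l * (2 * AA a b 2)" using e1 e2 by simp
    hence "AA a b 1 = 2 * AA a b 2" using \<open>l \<noteq> 0\<close> by (rule mult_left_cancel[THEN iffD1, rotated])
    with lt show False by simp
  qed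
  define N where "N = (LEAST n. s n < 0)"
  have sN: "s N < 0" unfolding N_def using \<open>\<exists>n. s n < 0\<close> by (metis LeastI)
  have lo: "s n \<ge> 0" if "n < N" for n using not_less_Least[OF that[unfolded N_def]] by simp
  have hi: "s n < 0" if "N \<le> n" for n
  proof -
    have "r N < l" using sN sr[of N] AA_pos[OF a b, of N] by (simp add: mult_less_0_iff)
    hence "r n < l" using rdec[OF that] by simp
    thus ?thesis using sr[of n] AA_pos[OF a b, of n] by (simp add: mult_pos_neg)
  qed
  have "(\<Sum>n. s n * y^n) < 0"
    using x xy sums_summable[OF sxs] sums_summable[OF sys] z lo hi[of "Suc N"]
    by (intro ratio_neg[where N=N]) (auto intro: less_imp_le hi)
  hence "c - ln (1 - y) < l * F y" using sys by (simp add: sums_iff)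
  hence "phi_abc a b c y < l" unfolding phi_abc_def F_def[symmetric] using Fx by (simp add: divide_less_eq)
  thus "phi_abc a b c y < phi_abc a b c x" unfolding l_def .
qed


theorem lemma7:
  fixes a b c :: real
  assumes "a > 0" and "b > 0"
  shows "((strict_mono_on {0<..<1} (phi_abc a b c) \<and>
            phi_abc a b c ` {0<..<1} = {c<..<Beta a b}) \<longleftrightarrow> c \<le> R_ab a b)
       \<and> (strict_antimono_on {0<..<1} (phi_abc a b c) \<longleftrightarrow> c \<ge> 1 / a + 1 / b)"
proof -
  have 1: "(strict_mono_on {0<..<1} (phi_abc a b c) \<and>
            phi_abc a b c ` {0<..<1} = {c<..<Beta a b}) \<longleftrightarrow> c \<le> R_ab a b"
  proof
    assume "strict_mono_on {0<..<1} (phi_abc a b c) \<and> phi_abc a b c ` {0<..<1} = {c<..<Beta a b}"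
    thus "c \<le> R_ab a b" using part_II[OF assms] by blast
  next
    assume c: "c \<le> R_ab a b"
    have m: "strict_mono_on {0<..<1} (phi_abc a b c)" by (rule phi_strict_mono[OF assms c])
    show "strict_mono_on {0<..<1} (phi_abc a b c) \<and> phi_abc a b c ` {0<..<1} = {c<..<Beta a b}"
      using m image_from_mono[OF assms m] by blast
  qed
  have 2: "strict_antimono_on {0<..<1} (phi_abc a b c) \<longleftrightarrow> c \<ge> 1 / a + 1 / b"
    using part_III[OF assms, of c] part_IV[OF assms, of c] by blast
  show ?thesis using 1 2 by blast
qed

end
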